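(* Let $R$ be a ring with identity and $a,b,c\in R$. The following are equivalent: (i) $a$ is left $(b,c)$-invertible; (ii) $a^\circ\cap bR=\{0\}$, $abR\cap c^\circ=\{0\}$ and $R=Rca+{}^\circ b$; (iii) $a^\circ\cap bR=\{0\}$ and $R=Rca+{}^\circ b$; (iv) $abR\cap c^\circ=\{0\}$ and $R=Rca+{}^\circ b$; (v) $R=Rca+{}^\circ b$.
   Context: For $x\in R$: $xR=\{xr:r\in R\}$, $Rx=\{rx:r\in R\}$, $x^\circ=\{r: xr=0\}$, ${}^\circ x=\{r: rx=0\}$. The element $a$ is left $(b,c)$-invertible if there is $y\in R$ with $Ry\subseteq Rc$ and $yab=b$. *)

theory Defs
  imports Main
begin

definition rideal :: "'a::ring_1 \<Rightarrow> 'a set" where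
  "rideal x = {x * r | r. True}"

definition lideal :: "'a::ring_1 \<Rightarrow> 'a set" where
  "lideal x = {r * x | r. True}"

definition rann :: "'a::ring_1 \<Rightarrow> 'a set" where
  "rann x = {r. x * r = 0}"

definition lann :: "'a::ring_1 \<Rightarrow> 'a set" where
  "lann x = {r. r * x = 0}"

definition left_bc_invertible :: "'a::ring_1 \<Rightarrow> 'a \<Rightarrow> 'a \<Rightarrow> bool" where
  "left_bc_invertible a b c \<longleftrightarrow> (\<exists>y. lideal y \<subseteq> lideal c \<and> y * a * b = b)"

end

theory Submission
  imports Defs
begin

lemma U_iff:
  fixes a b c :: "'a::ring_1"
  shows "(UNIV = {x + y | x y. x \<in> lideal (c * a) \<and> y \<in> lann b})
     \<longleftrightarrow> (\<exists>s. s * c * a * b = b)"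
proof
  assume h: "UNIV = {x + y | x y. x \<in> lideal (c * a) \<and> y \<in> lann b}"
  have "(1::'a) \<in> UNIV" by simp
  then obtain x y where "1 = x + y" "x \<in> lideal (c*a)" "y \<in> lann b"
    using h by blast
  then obtain s where "1 = s*(c*a) + y" "y * b = 0"
    by (auto simp: lideal_def lann_def)
  then have "b = s*(c*a)*b + y*b" by (metis distrib_right mult_1_left)
  then show "\<exists>s. s * c * a * b = b" using \<open>y*b=0\<close> by (metis add_0_right mult.assoc)
next
  assume "\<exists>s. s * c * a * b = b"
  then obtain s where hs: "s * c * a * b = b" by blast
  show "UNIV = {x + y | x y. x \<in> lideal (c * a) \<and> y \<in> lann b}"
  proof (rule set_eqI, rule iffI)
    fix t :: 'a
    have "t * s * c * a * b = t * b" using hs by (simp add: mult.assoc)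
    hence "(t - t*s*c*a) * b = 0" by (simp add: algebra_simps)
    moreover have "t*s*c*a \<in> lideal (c*a)" unfolding lideal_def
      by (rule CollectI, rule exI[of _ "t*s"], simp add: mult.assoc)
    ultimately show "t \<in> {x + y | x y. x \<in> lideal (c * a) \<and> y \<in> lann b}"
      unfolding lann_def by (intro CollectI exI[of _ "t*s*c*a"] exI[of _ "t - t*s*c*a"]) auto
  qed simp
qed

lemma inv_iff:
  fixes a b c :: "'a::ring_1"
  shows "left_bc_invertible a b c \<longleftrightarrow> (\<exists>s. s * c * a * b = b)"
proof
  assume "left_bc_invertible a b c"
  then obtain y where "lideal y \<subseteq> lideal c" "y*a*b = b" unfolding left_bc_invertible_def by blast
  moreover have "y \<in> lideal y" unfolding lideal_def by (rule CollectI, rule exI[of _ 1]) simp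
  ultimately obtain s where "y = s*c" unfolding lideal_def by blast
  then show "\<exists>s. s * c * a * b = b" using \<open>y*a*b = b\<close> by blast
next
  assume "\<exists>s. s * c * a * b = b"
  then obtain s where hs: "s * c * a * b = b" by blast
  have "lideal (s*c) \<subseteq> lideal c" unfolding lideal_def
    by (auto, metis mult.assoc)
  then show "left_bc_invertible a b c" unfolding left_bc_invertible_def using hs by blast
qed

lemma ann1:
  fixes a b c :: "'a::ring_1"
  assumes hs: "s * c * a * b = b"
  shows "rann a \<inter> rideal b = {0}"
proof -
  have "x = 0" if "a * x = 0" "x = b * r" for x r
  proof -
    have "x = s*c*a*b*r" using hs that by simp
    also have "\<dots> = s*c*(a*x)" using that by (simp add: mult.assoc)
    finally show ?thesis using that by simp
  qed
  moreover have "0 \<in> rideal b" unfolding rideal_def by (rule CollectI, rule exI[of _ 0]) simp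
  ultimately show ?thesis unfolding rann_def rideal_def by auto
qed

lemma ann2:
  fixes a b c :: "'a::ring_1"
  assumes hs: "s * c * a * b = b"
  shows "rideal (a*b) \<inter> rann c = {0}"
proof -
  have "x = 0" if "c * x = 0" "x = a * b * r" for x r
  proof -
    have "b*r = s*c*a*b*r" using hs by simp
    also have "\<dots> = s*(c*x)" using that by (simp add: mult.assoc)
    finally have "b*r = 0" using that by simp
    then show ?thesis using that by (simp add: mult.assoc)
  qed
  moreover have "0 \<in> rideal (a*b)" unfolding rideal_def by (rule CollectI, rule exI[of _ 0]) simp
  ultimately show ?thesis unfolding rann_def rideal_def by auto
qed

theorem theorem2p13:
  fixes a b c :: "'a::ring_1"
  defines "S \<equiv> {x + y | x y. x \<in> lideal (c * a) \<and> y \<in> lann b}"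
  shows "(left_bc_invertible a b c
          \<longleftrightarrow> (rann a \<inter> rideal b = {0} \<and> rideal (a * b) \<inter> rann c = {0} \<and> UNIV = S))
       \<and> ((rann a \<inter> rideal b = {0} \<and> rideal (a * b) \<inter> rann c = {0} \<and> UNIV = S)
          \<longleftrightarrow> (rann a \<inter> rideal b = {0} \<and> UNIV = S))
       \<and> ((rann a \<inter> rideal b = {0} \<and> UNIV = S)
          \<longleftrightarrow> (rideal (a * b) \<inter> rann c = {0} \<and> UNIV = S))
       \<and> ((rideal (a * b) \<inter> rann c = {0} \<and> UNIV = S)
          \<longleftrightarrow> UNIV = S)"
proof -
  have e1: "(UNIV = S) = (\<exists>s. s * c * a * b = b)" unfolding S_def by (rule U_iff)
  have e2: "left_bc_invertible a b c = (\<exists>s. s * c * a * b = b)" by (rule inv_iff)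
  have i1: "UNIV = S \<Longrightarrow> rann a \<inter> rideal b = {0}" using e1 ann1 by metis
  have i2: "UNIV = S \<Longrightarrow> rideal (a*b) \<inter> rann c = {0}" using e1 ann2 by metis
  show ?thesis using e1 e2 i1 i2 by argo
qed

end
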